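(* Let $N=2$, $v_1<v_2$, prior probabilities $p(v_1),p(v_2)>0$ summing to $1$, and $\lambda,\sigma_Z,T>0$. Let the signal be $\tilde z\sim N(0,\sigma_Z^2T)$ with the optimal posteriors $p(v_n|z)=e^{(v_nz+\mu_n)/\lambda}/\sum_{n'=1}^2e^{(v_{n'}z+\mu_{n'})/\lambda}$, where $(\mu_1,\mu_2)$ is chosen (uniquely up to a common additive constant) so that $\mathbb E[p(v_n|\tilde z)]=p(v_n)$ for $n=1,2$. Then the density of the conditional expected payoff $\mathbb E[\tilde v|\tilde z]=\sum_nv_np(v_n|\tilde z)$ is $$f_s(v)=\frac{\lambda}{\sigma_Z\sqrt T\,(v_2-v)(v-v_1)}\,\phi\Big(\frac{\lambda}{\sigma_Z\sqrt T(v_1-v_2)}\log\Big(\frac{v_2-v}{v-v_1}\Big)-\frac{\mu_1-\mu_2}{\sigma_Z\sqrt T(v_1-v_2)}\Big),\qquad v\in(v_1,v_2),$$ where $\phi$ is the standard normal density.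
   Context: These posteriors are the optimal posteriors of the informed trader's problem of maximizing expected Kyle–Back trading profit minus the mutual-information cost $\lambda I(\tilde s;\tilde v)$ when the normal signal $\tilde z$ is used. *)

theory Defs
  imports "HOL-Probability.Probability"
begin

definition posterior :: "(nat \<Rightarrow> real) \<Rightarrow> (nat \<Rightarrow> real) \<Rightarrow> real \<Rightarrow> nat \<Rightarrow> real \<Rightarrow> real" where
  "posterior v \<mu> lam n z =
     exp ((v n * z + \<mu> n) / lam) / (\<Sum>n'\<in>{1..2::nat}. exp ((v n' * z + \<mu> n') / lam))"

definition cond_exp_payoff :: "(nat \<Rightarrow> real) \<Rightarrow> (nat \<Rightarrow> real) \<Rightarrow> real \<Rightarrow> real \<Rightarrow> real" where
  "cond_exp_payoff v \<mu> lam z = (\<Sum>n\<in>{1..2::nat}. v n * posterior v \<mu> lam n z)"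

end

theory Submission
  imports Defs
begin

lemma g_formula:
  "cond_exp_payoff v \<mu> lam z =
     (v 1 * exp ((v 1 * z + \<mu> 1) / lam) + v 2 * exp ((v 2 * z + \<mu> 2) / lam)) /
     (exp ((v 1 * z + \<mu> 1) / lam) + exp ((v 2 * z + \<mu> 2) / lam))"
  unfolding cond_exp_payoff_def posterior_def
  by (simp add: numeral_2_eq_2 add_divide_distrib)

lemma g_ge:
  fixes v \<mu> :: "nat \<Rightarrow> real"
  assumes v: "v 1 < v 2" and lam: "lam > 0" and a: "v 1 < a" "a < v 2"
  shows "a \<le> cond_exp_payoff v \<mu> lam z \<longleftrightarrow>
         (lam * ln ((a - v 1) / (v 2 - a)) - (\<mu> 2 - \<mu> 1)) / (v 2 - v 1) \<le> z"
proof -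
  define e1 where "e1 = exp ((v 1 * z + \<mu> 1) / lam)"
  define e2 where "e2 = exp ((v 2 * z + \<mu> 2) / lam)"
  have e1: "e1 > 0" and e2: "e2 > 0" by (auto simp: e1_def e2_def)
  have q: "e2 / e1 = exp (((v 2 - v 1) * z + (\<mu> 2 - \<mu> 1)) / lam)"
    unfolding e1_def e2_def by (simp add: exp_diff[symmetric] diff_divide_distrib algebra_simps)
  have "a \<le> cond_exp_payoff v \<mu> lam z \<longleftrightarrow> a * (e1 + e2) \<le> v 1 * e1 + v 2 * e2"
    unfolding g_formula e1_def[symmetric] e2_def[symmetric] using e1 e2
    by (simp add: pos_le_divide_eq)
  also have "\<dots> \<longleftrightarrow> (a - v 1) / (v 2 - a) \<le> e2 / e1"
    using e1 e2 a by (simp add: divide_le_eq le_divide_eq algebra_simps)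
  also have "\<dots> \<longleftrightarrow> ln ((a - v 1) / (v 2 - a)) \<le> ((v 2 - v 1) * z + (\<mu> 2 - \<mu> 1)) / lam"
    unfolding q using a ln_le_cancel_iff[of "(a - v 1) / (v 2 - a)" "exp (((v 2 - v 1) * z + (\<mu> 2 - \<mu> 1)) / lam)"] by simp
  also have "\<dots> \<longleftrightarrow> (lam * ln ((a - v 1) / (v 2 - a)) - (\<mu> 2 - \<mu> 1)) / (v 2 - v 1) \<le> z"
    using lam v by (simp add: divide_le_eq le_divide_eq algebra_simps)
  finally show ?thesis .
qed

lemma g_le:
  fixes v \<mu> :: "nat \<Rightarrow> real"
  assumes v: "v 1 < v 2" and lam: "lam > 0" and a: "v 1 < a" "a < v 2"
  shows "cond_exp_payoff v \<mu> lam z \<le> a \<longleftrightarrow>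
         z \<le> (lam * ln ((a - v 1) / (v 2 - a)) - (\<mu> 2 - \<mu> 1)) / (v 2 - v 1)"
proof -
  define e1 where "e1 = exp ((v 1 * z + \<mu> 1) / lam)"
  define e2 where "e2 = exp ((v 2 * z + \<mu> 2) / lam)"
  have e1: "e1 > 0" and e2: "e2 > 0" by (auto simp: e1_def e2_def)
  have q: "e2 / e1 = exp (((v 2 - v 1) * z + (\<mu> 2 - \<mu> 1)) / lam)"
    unfolding e1_def e2_def by (simp add: exp_diff[symmetric] diff_divide_distrib algebra_simps)
  have "cond_exp_payoff v \<mu> lam z \<le> a \<longleftrightarrow> v 1 * e1 + v 2 * e2 \<le> a * (e1 + e2)"
    unfolding g_formula e1_def[symmetric] e2_def[symmetric] using e1 e2
    by (simp add: pos_divide_le_eq)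
  also have "\<dots> \<longleftrightarrow> (v 2 - a) * e2 \<le> (a - v 1) * e1"
    by (simp add: algebra_simps)
  also have "\<dots> \<longleftrightarrow> e2 / e1 \<le> (a - v 1) / (v 2 - a)"
    using e1 e2 a by (simp add: divide_le_eq le_divide_eq mult.commute)
  also have "\<dots> \<longleftrightarrow> ((v 2 - v 1) * z + (\<mu> 2 - \<mu> 1)) / lam \<le> ln ((a - v 1) / (v 2 - a))"
    unfolding q using a ln_le_cancel_iff[of "exp (((v 2 - v 1) * z + (\<mu> 2 - \<mu> 1)) / lam)" "(a - v 1) / (v 2 - a)"] by simp
  also have "\<dots> \<longleftrightarrow> z \<le> (lam * ln ((a - v 1) / (v 2 - a)) - (\<mu> 2 - \<mu> 1)) / (v 2 - v 1)"
    using lam v by (simp add: divide_le_eq le_divide_eq algebra_simps)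
  finally show ?thesis .
qed

lemma g_range:
  fixes v \<mu> :: "nat \<Rightarrow> real"
  assumes v: "v 1 < v 2"
  shows "v 1 < cond_exp_payoff v \<mu> lam z \<and> cond_exp_payoff v \<mu> lam z < v 2"
proof -
  define e1 where "e1 = exp ((v 1 * z + \<mu> 1) / lam)"
  define e2 where "e2 = exp ((v 2 * z + \<mu> 2) / lam)"
  have e1: "e1 > 0" and e2: "e2 > 0" by (auto simp: e1_def e2_def)
  have "v 1 * e2 < v 2 * e2" "v 1 * e1 < v 2 * e1" using v e1 e2 by auto
  then show ?thesis
    unfolding g_formula e1_def[symmetric] e2_def[symmetric] using e1 e2
    by (simp add: pos_divide_less_eq pos_less_divide_eq algebra_simps)
qed


lemma normal_std:
  assumes "s > 0"
  shows "normal_density 0 s y = std_normal_density (y / s) / s"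
proof -
  have "sqrt (2 * pi * s\<^sup>2) = sqrt (2 * pi) * s"
    using assms by (simp add: real_sqrt_mult)
  then show ?thesis
    unfolding normal_density_def using assms by (simp add: power_divide field_simps)
qed


lemma aux_alg: "(D::real) \<noteq> 0 \<Longrightarrow> s \<noteq> 0 \<Longrightarrow>
  lam / (s * (- D)) * (- (L1 - L2)) - (m1 - m2) / (s * (- D)) = ((lam * (L1 - L2) - (m2 - m1)) / D) / s"
  by (simp add: field_simps)

lemma aux_arg: "v1 < x \<Longrightarrow> x < v2 \<Longrightarrow> (s::real) > 0 \<Longrightarrow> lam / (s * (v1 - v2)) * ln ((v2 - x) / (x - v1)) - (m1 - m2) / (s * (v1 - v2))
               = ((lam * (ln (x - v1) - ln (v2 - x)) - (m2 - m1)) / (v2 - v1)) / s"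
proof -
  assume x: "v1 < x" "x < v2" and s: "s > 0"
  have "ln ((v2 - x) / (x - v1)) = - (ln (x - v1) - ln (v2 - x))" using x by (simp add: ln_div)
  moreover have "v1 - v2 = - (v2 - v1)" by simp
  ultimately show ?thesis using aux_alg[of "v2 - v1" s lam "ln (x - v1)" "ln (v2 - x)" m1 m2] x s
    by simp
qed

lemma aux_deriv: "v1 < x \<Longrightarrow> x < v2 \<Longrightarrow> ((\<lambda>x. (lam * (ln (x - v1) - ln (v2 - x)) - m) / (v2 - v1)) has_real_derivative lam / ((x - v1) * (v2 - x))) (at x)"
proof -
  assume x: "v1 < x" "x < v2"
  have d1: "((\<lambda>x. ln (x - v1)) has_real_derivative 1 / (x - v1) * 1) (at x)"
    by (rule DERIV_chain2[where f=ln]) (use x in \<open>auto intro!: DERIV_ln_divide derivative_eq_intros\<close>)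
  have d2: "((\<lambda>x. ln (v2 - x)) has_real_derivative 1 / (v2 - x) * (- 1)) (at x)"
    by (rule DERIV_chain2[where f=ln]) (use x in \<open>auto intro!: DERIV_ln_divide derivative_eq_intros\<close>)
  have "((\<lambda>x. (lam * (ln (x - v1) - ln (v2 - x)) - m) / (v2 - v1)) has_real_derivative
        (lam * (1 / (x - v1) * 1 - 1 / (v2 - x) * (- 1)) - 0) / (v2 - v1)) (at x)"
    by (intro DERIV_cdivide DERIV_diff DERIV_cmult d1 d2 DERIV_const)
  moreover have "(lam * (1 / (x - v1) * 1 - 1 / (v2 - x) * (- 1)) - 0) / (v2 - v1) = lam / ((x - v1) * (v2 - x))"
  proof -
    have "1 / (x - v1) * 1 - 1 / (v2 - x) * (- 1) = (v2 - v1) / ((x - v1) * (v2 - x))"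
      using x by (simp add: field_simps)
    then show ?thesis using x by simp
  qed
  ultimately show ?thesis by simp
qed

lemma aux_dens: "(s::real) > 0 \<Longrightarrow>
   normal_density 0 s H * (lam / ((x - v1) * (v2 - x))) = lam / (s * (v2 - x) * (x - v1)) * std_normal_density (H/s)"
  unfolding normal_std[of s H] by (simp only: divide_inverse mult_ac inverse_mult_distrib)
lemma key:
  fixes v \<mu> :: "nat \<Rightarrow> real" and lam s a b :: real
  assumes v: "v 1 < v 2" and lam: "lam > 0" and s: "s > 0"
    and ab: "v 1 < a" "a \<le> b" "b < v 2"
  defines "f \<equiv> (\<lambda>x. ennreal (if x \<in> {v 1<..<v 2} then
                lam / (s * (v 2 - x) * (x - v 1)) *
                std_normal_density (lam / (s * (v 1 - v 2)) * ln ((v 2 - x) / (x - v 1))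
                                    - (\<mu> 1 - \<mu> 2) / (s * (v 1 - v 2)))
              else 0))"
  shows "emeasure (distr (density lborel (normal_density 0 s)) lborel (cond_exp_payoff v \<mu> lam)) {a..b}
       = emeasure (density lborel f) {a..b}"
proof -
  define h where "h x = (lam * (ln (x - v 1) - ln (v 2 - x)) - (\<mu> 2 - \<mu> 1)) / (v 2 - v 1)" for x
  define h' where "h' x = lam / ((x - v 1) * (v 2 - x))" for x
  have hh: "h x = (lam * ln ((x - v 1) / (v 2 - x)) - (\<mu> 2 - \<mu> 1)) / (v 2 - v 1)"
    if "v 1 < x" "x < v 2" for x
    using that by (simp add: h_def ln_div)
  have meas[measurable]: "cond_exp_payoff v \<mu> lam \<in> borel_measurable borel"
    unfolding cond_exp_payoff_def posterior_def by measurable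
  have pre: "cond_exp_payoff v \<mu> lam -` {a..b} = {h a..h b}"
  proof -
    { fix z
      have "cond_exp_payoff v \<mu> lam z \<in> {a..b} \<longleftrightarrow> z \<in> {h a..h b}"
        using g_ge[OF v lam, of a \<mu> z] g_le[OF v lam, of b \<mu> z] ab hh[of a] hh[of b]
        by auto }
    then show ?thesis by auto
  qed
  have "emeasure (distr (density lborel (normal_density 0 s)) lborel (cond_exp_payoff v \<mu> lam)) {a..b}
      = emeasure (density lborel (normal_density 0 s)) {h a..h b}"
    by (subst emeasure_distr) (auto simp: pre)
  also have "\<dots> = (\<integral>\<^sup>+x. ennreal (normal_density 0 s x * indicator {h a..h b} x) \<partial>lborel)"
    by (subst emeasure_density) (auto intro!: nn_integral_cong split: split_indicator)
  also have "\<dots> = (\<integral>\<^sup>+x. ennreal (normal_density 0 s (h x) * h' x * indicator {a..b} x) \<partial>lborel)"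
  proof (rule nn_integral_substitution)
    show "set_borel_measurable borel {h a..h b} (normal_density 0 s)"
      by (simp add: set_borel_measurable_def)
    show "(h has_real_derivative h' x) (at x)" if "x \<in> {a..b}" for x
    proof -
      have x: "v 1 < x" "x < v 2" using that ab by auto
      show ?thesis
        unfolding h_def[abs_def] h'_def using aux_deriv[OF x] by simp
    qed
    show "continuous_on {a..b} h'"
      unfolding h'_def using ab by (intro continuous_intros) auto
    show "0 \<le> h' x" if "x \<in> {a..b}" for x
      using that ab lam by (auto simp: h'_def intro!: divide_nonneg_pos mult_pos_pos)
  qed (use ab in auto)
  also have "\<dots> = (\<integral>\<^sup>+x. f x * indicator {a..b} x \<partial>lborel)"
  proof (rule nn_integral_cong)
    fix x
    show "ennreal (normal_density 0 s (h x) * h' x * indicator {a..b} x) = f x * indicator {a..b} x"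
    proof (cases "x \<in> {a..b}")
      case True
      then have x: "v 1 < x" "x < v 2" using ab by auto
      have arg: "lam / (s * (v 1 - v 2)) * ln ((v 2 - x) / (x - v 1)) - (\<mu> 1 - \<mu> 2) / (s * (v 1 - v 2))
               = h x / s"
        using aux_arg[OF x s] unfolding h_def .
      have e: "normal_density 0 s (h x) * h' x = lam / (s * (v 2 - x) * (x - v 1)) *
                std_normal_density (lam / (s * (v 1 - v 2)) * ln ((v 2 - x) / (x - v 1))
                                    - (\<mu> 1 - \<mu> 2) / (s * (v 1 - v 2)))"
        unfolding arg h'_def by (rule aux_dens[OF s])
      have fx: "f x = ennreal (lam / (s * (v 2 - x) * (x - v 1)) *
                std_normal_density (lam / (s * (v 1 - v 2)) * ln ((v 2 - x) / (x - v 1))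
                                    - (\<mu> 1 - \<mu> 2) / (s * (v 1 - v 2))))"
        using x unfolding f_def by simp
      show ?thesis using True unfolding fx e[symmetric] by simp
    qed simp
  qed
  also have "\<dots> = emeasure (density lborel f) {a..b}"
    by (subst emeasure_density) (auto simp: f_def)
  finally show ?thesis .
qed


theorem corollary1:
  fixes v p \<mu> :: "nat \<Rightarrow> real" and lam \<sigma>Z T :: real
  assumes "v 1 < v 2"
    and "p 1 > 0" and "p 2 > 0" and "p 1 + p 2 = 1"
    and "lam > 0" and "\<sigma>Z > 0" and "T > 0"
    and "\<forall>n\<in>{1..2::nat}.
           (LINT z|lborel. normal_density 0 (\<sigma>Z * sqrt T) z * posterior v \<mu> lam n z) = p n"
  shows "distributed (density lborel (normal_density 0 (\<sigma>Z * sqrt T))) lborel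
           (cond_exp_payoff v \<mu> lam)
           (\<lambda>x. ennreal (if x \<in> {v 1<..<v 2} then
                lam / (\<sigma>Z * sqrt T * (v 2 - x) * (x - v 1)) *
                std_normal_density (lam / (\<sigma>Z * sqrt T * (v 1 - v 2)) * ln ((v 2 - x) / (x - v 1))
                                    - (\<mu> 1 - \<mu> 2) / (\<sigma>Z * sqrt T * (v 1 - v 2)))
              else 0))"
    (is "distributed ?N lborel ?g ?f")
proof -
  have v: "v 1 < v 2" and lam: "lam > 0" using assms by auto
  have s: "\<sigma>Z * sqrt T > 0" using assms by (simp add: mult_pos_pos)
  have gm[measurable]: "?g \<in> borel_measurable borel"
    unfolding cond_exp_payoff_def posterior_def by measurable
  have fm[measurable]: "?f \<in> borel_measurable borel"
    by measurable
  have Nprob: "prob_space ?N" using prob_space_normal_density s by blast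
  have M1prob: "prob_space (distr ?N lborel ?g)"
    by (rule prob_space.prob_space_distr[OF Nprob]) simp
  define \<Omega> where "\<Omega> = {v 1<..<v 2}"
  have r1: "emeasure (distr ?N lborel ?g) A = emeasure (distr ?N lborel ?g) (A \<inter> \<Omega>)"
    if A: "A \<in> sets borel" for A
  proof -
    have "?g -` A \<inter> space ?N = ?g -` (A \<inter> \<Omega>) \<inter> space ?N"
      using g_range[OF v, of \<mu> lam] by (auto simp: \<Omega>_def)
    then show ?thesis using A by (simp add: emeasure_distr \<Omega>_def)
  qed
  have r2: "emeasure (density lborel ?f) A = emeasure (density lborel ?f) (A \<inter> \<Omega>)"
    if A: "A \<in> sets borel" for A
    using A by (simp add: emeasure_density \<Omega>_def) (intro nn_integral_cong, auto split: split_indicator)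
  have eqc: "emeasure (distr ?N lborel ?g) {c<..} = emeasure (density lborel ?f) {c<..}" for c
  proof (cases "c < v 2")
    case False
    then have "{c<..} \<inter> \<Omega> = {}" by (auto simp: \<Omega>_def)
    then show ?thesis using r1[of "{c<..}"] r2[of "{c<..}"] by simp
  next
    case True
    define c' where "c' = max c (v 1)"
    define \<delta> where "\<delta> = v 2 - c'"
    have c': "v 1 \<le> c'" "c' < v 2" "0 < \<delta>" using True v by (auto simp: c'_def \<delta>_def)
    define A where "A n = {c' + \<delta> / (real n + 2) .. v 2 - \<delta> / (real n + 2)}" for n :: nat
    have Aint: "{c<..} \<inter> \<Omega> = (\<Union>n. A n)"
    proof
      show "(\<Union>n. A n) \<subseteq> {c<..} \<inter> \<Omega>"
      proof
        fix x assume "x \<in> (\<Union>n. A n)"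
        then obtain n where "x \<in> A n" by auto
        moreover have p: "\<delta> / (real n + 2) > 0" using c' by simp
        moreover have "c \<le> c'" by (simp add: c'_def)
        ultimately show "x \<in> {c<..} \<inter> \<Omega>" using c' p unfolding A_def \<Omega>_def
          by (simp only: atLeastAtMost_iff greaterThanLessThan_iff greaterThan_iff Int_iff) linarith
      qed
    next
      show "{c<..} \<inter> \<Omega> \<subseteq> (\<Union>n. A n)"
      proof
        fix x assume x: "x \<in> {c<..} \<inter> \<Omega>"
        define \<epsilon> where "\<epsilon> = min (x - c') (v 2 - x)"
        have \<epsilon>: "\<epsilon> > 0" using x by (auto simp: \<epsilon>_def c'_def \<Omega>_def)
        obtain n :: nat where n: "\<delta> / \<epsilon> < real n" using reals_Archimedean2 by blast
        have "\<delta> < \<epsilon> * real n" using n \<epsilon> by (simp add: divide_less_eq mult.commute)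
        also have "\<dots> \<le> \<epsilon> * (real n + 2)" using \<epsilon> by simp
        finally have "\<delta> / (real n + 2) < \<epsilon>" by (simp add: divide_less_eq mult.commute)
        then have "x \<in> A n" unfolding A_def \<epsilon>_def by auto
        then show "x \<in> (\<Union>n. A n)" by auto
      qed
    qed
    have inc: "incseq A"
    proof (rule incseq_SucI)
      fix n
      have "\<delta> / (real (Suc n) + 2) \<le> \<delta> / (real n + 2)"
        using c' by (intro divide_left_mono) auto
      then show "A n \<subseteq> A (Suc n)" unfolding A_def by auto
    qed
    have keyn: "emeasure (distr ?N lborel ?g) (A n) = emeasure (density lborel ?f) (A n)" for n
    proof -
      have p: "\<delta> / (real n + 2) > 0" using c' by simp
      have q: "2 * (\<delta> / (real n + 2)) \<le> \<delta>"
        using c' by (simp add: divide_le_eq)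
      define e where "e = \<delta> / (real n + 2)"
      have e: "0 < e" "2 * e \<le> \<delta>" using p q by (auto simp: e_def)
      have "v 1 < c' + e" "c' + e \<le> v 2 - e" "v 2 - e < v 2"
        using e c' \<delta>_def by linarith+
      from key[OF v lam s this, of \<mu>] show ?thesis unfolding A_def e_def .
    qed
    have "emeasure (distr ?N lborel ?g) {c<..} = emeasure (distr ?N lborel ?g) (\<Union>n. A n)"
      using r1[of "{c<..}"] Aint by simp
    also have "\<dots> = (SUP n. emeasure (distr ?N lborel ?g) (A n))"
      by (rule SUP_emeasure_incseq[symmetric, OF _ inc]) (auto simp: A_def)
    also have "\<dots> = (SUP n. emeasure (density lborel ?f) (A n))"
      using keyn by simp
    also have "\<dots> = emeasure (density lborel ?f) (\<Union>n. A n)"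
      by (rule SUP_emeasure_incseq[OF _ inc]) (auto simp: A_def)
    also have "\<dots> = emeasure (density lborel ?f) {c<..}"
      using r2[of "{c<..}"] Aint by simp
    finally show ?thesis .
  qed
  have "distr ?N lborel ?g = density lborel ?f"
  proof (rule measure_eqI_lessThan)
    show "emeasure (distr ?N lborel ?g) {x<..} < \<infinity>" for x
      using prob_space.emeasure_le_1[OF M1prob, of "{x<..}"]
      by (simp add: le_less_trans)
  qed (use eqc in auto)
  then show ?thesis unfolding distributed_def by simp
qed

end
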